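(* Let $(X,\mathrm{dist})$ be a metric space, $\Sigma$ a metric space, $\{U_\sigma(t,\tau)\}_{\sigma\in\Sigma}$ a family of processes on $X$, and $K\subset X$ a compact set. Then $K$ is uniformly attracting for the family if and only if $\emptyset\ne L_\Sigma(y_n)\subset K$ for every $y_n\in\mathfrak{C}_\Sigma$.
   Context: A process on $X$ is a family of maps $U(t,\tau):X\to X$, indexed by reals $t\ge\tau$, with $U(\tau,\tau)=\mathrm{id}_X$ and $U(t,\tau)=U(t,s)U(s,\tau)$ for $t\ge s\ge\tau$; no continuity is assumed. For nonempty $B,C\subset X$, $\delta_X(B,C)=\sup_{x\in B}\inf_{\xi\in C}\mathrm{dist}(x,\xi)$. A set $K\subset X$ is uniformly attracting if for every bounded $C\subset X$, $\lim_{t-\tau\to\infty}\sup_{\sigma\in\Sigma}\delta_X(U_\sigma(t,\tau)C,K)=0$. $\mathfrak{C}_\Sigma$ is the collection of all sequences $y_n=U_{\sigma_n}(t_n,\tau_n)x_n$ with $x_n$ a bounded sequence in $X$, $\sigma_n\in\Sigma$, $t_n-\tau_n\to\infty$. For $y_n\in\mathfrak{C}_\Sigma$, $L_\Sigma(y_n)=\{x\in X: y_n\to x \text{ along some subsequence}\}$. *)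

theory Defs
  imports "HOL-Analysis.Analysis"
begin

text \<open>A family of processes indexed by \<sigma>: U \<sigma> t \<tau> x is U_\<sigma>(t,\<tau>) x (only meaningful for t \<ge> \<tau>).
  No continuity is assumed.\<close>
definition is_process_family :: "('s \<Rightarrow> real \<Rightarrow> real \<Rightarrow> 'a \<Rightarrow> 'a) \<Rightarrow> bool" where
  "is_process_family U \<longleftrightarrow>
     (\<forall>\<sigma> \<tau>. U \<sigma> \<tau> \<tau> = id) \<and>
     (\<forall>\<sigma> t s \<tau>. \<tau> \<le> s \<and> s \<le> t \<longrightarrow> U \<sigma> t \<tau> = U \<sigma> t s \<circ> U \<sigma> s \<tau>)"

definition hsemidist :: "'a::metric_space set \<Rightarrow> 'a set \<Rightarrow> ereal" where
  "hsemidist B C = (SUP x\<in>B. INF \<xi>\<in>C. ereal (dist x \<xi>))"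

definition uniformly_attracting ::
  "('s \<Rightarrow> real \<Rightarrow> real \<Rightarrow> 'a::metric_space \<Rightarrow> 'a) \<Rightarrow> 'a set \<Rightarrow> bool" where
  "uniformly_attracting U K \<longleftrightarrow>
     (\<forall>C. bounded C \<and> C \<noteq> {} \<longrightarrow>
        (\<forall>\<epsilon>>0. \<exists>T. \<forall>t \<tau>. \<tau> \<le> t \<and> T \<le> t - \<tau> \<longrightarrow>
            \<bar>(SUP \<sigma>. hsemidist (U \<sigma> t \<tau> ` C) K)\<bar> < ereal \<epsilon>))"

definition seq_class :: "('s \<Rightarrow> real \<Rightarrow> real \<Rightarrow> 'a::metric_space \<Rightarrow> 'a) \<Rightarrow> (nat \<Rightarrow> 'a) set" where
  "seq_class U = {y. \<exists>x \<sigma> t \<tau>. bounded (range x) \<and> (\<forall>n. \<tau> n \<le> t n) \<and>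
       filterlim (\<lambda>n. t n - \<tau> n) at_top sequentially \<and>
       (\<forall>n. y n = U (\<sigma> n) (t n) (\<tau> n) (x n))}"

definition limit_set :: "(nat \<Rightarrow> 'a::topological_space) \<Rightarrow> 'a set" where
  "limit_set y = {p. \<exists>r. strict_mono r \<and> (y \<circ> r) \<longlonglongrightarrow> p}"

end

theory Submission
  imports Defs
begin

lemma hsemidist_nonneg:
  assumes "B \<noteq> {}" shows "0 \<le> hsemidist B K"
proof -
  obtain b where "b \<in> B" using assms by blast
  have "0 \<le> (INF \<xi>\<in>K. ereal (dist b \<xi>))" by (rule INF_greatest) simp
  then show ?thesis unfolding hsemidist_def using \<open>b \<in> B\<close> by (meson SUP_upper2)
qed

lemma lim_close:
  fixes f g :: "nat \<Rightarrow> 'a::metric_space"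
  assumes "f \<longlonglongrightarrow> p" "(\<lambda>n. dist (g n) (f n)) \<longlonglongrightarrow> 0" shows "g \<longlonglongrightarrow> p"
proof -
  have "(\<lambda>n. dist (f n) p) \<longlonglongrightarrow> 0" using assms(1) tendsto_dist_iff by blast
  hence h: "(\<lambda>n. dist (g n) (f n) + dist (f n) p) \<longlonglongrightarrow> 0" using assms(2) tendsto_add_zero by blast
  have "(\<lambda>n. dist (g n) p) \<longlonglongrightarrow> 0"
    by (rule tendsto_sandwich[of "\<lambda>n. 0" _ _ "\<lambda>n. dist (g n) (f n) + dist (f n) p"])
       (use h in \<open>auto intro!: always_eventually dist_triangle\<close>)
  then show ?thesis using tendsto_dist_iff by blast
qed

theorem proposition2p7:
  fixes U :: "'s::metric_space \<Rightarrow> real \<Rightarrow> real \<Rightarrow> 'a::metric_space \<Rightarrow> 'a"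
    and K :: "'a set"
  assumes "is_process_family U"
    and "compact K"
  shows "uniformly_attracting U K \<longleftrightarrow>
           (\<forall>y\<in>seq_class U. limit_set y \<noteq> {} \<and> limit_set y \<subseteq> K)"
proof
  assume UA: "uniformly_attracting U K"
  show "\<forall>y\<in>seq_class U. limit_set y \<noteq> {} \<and> limit_set y \<subseteq> K"
  proof
    fix y assume "y \<in> seq_class U"
    then obtain x \<sigma> t \<tau> where bx: "bounded (range x)" and le: "\<forall>n. \<tau> n \<le> t n"
      and lim: "filterlim (\<lambda>n. t n - \<tau> n) at_top sequentially"
      and yd: "\<forall>n. y n = U (\<sigma> n) (t n) (\<tau> n) (x n)" unfolding seq_class_def mem_Collect_eq by (elim exE conjE)
    have ev: "eventually (\<lambda>n. \<exists>k\<in>K. dist (y n) k < e) sequentially" if e: "e > 0" for e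
    proof -
      obtain T where T: "\<And>t \<tau>. \<tau> \<le> t \<Longrightarrow> T \<le> t - \<tau> \<Longrightarrow>
            \<bar>(SUP \<sigma>. hsemidist (U \<sigma> t \<tau> ` range x) K)\<bar> < ereal e"
      proof -
        have "range x \<noteq> {}" by simp
        then have "\<exists>T. \<forall>t \<tau>. \<tau> \<le> t \<and> T \<le> t - \<tau> \<longrightarrow>
            \<bar>(SUP \<sigma>. hsemidist (U \<sigma> t \<tau> ` range x) K)\<bar> < ereal e"
          using UA[unfolded uniformly_attracting_def, rule_format, of "range x" e] bx e by blast
        then show ?thesis using that by blast
      qed
      have "eventually (\<lambda>n. T \<le> t n - \<tau> n) sequentially"
        using lim by (simp add: filterlim_at_top)
      then show ?thesis
      proof (rule eventually_mono)
        fix n assume "T \<le> t n - \<tau> n"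
        have a: "\<bar>(SUP \<sigma>. hsemidist (U \<sigma> (t n) (\<tau> n) ` range x) K)\<bar> < ereal e"
          by (rule T) (use le \<open>T \<le> t n - \<tau> n\<close> in auto)
        have "hsemidist (U (\<sigma> n) (t n) (\<tau> n) ` range x) K
              \<le> (SUP \<sigma>. hsemidist (U \<sigma> (t n) (\<tau> n) ` range x) K)" by (rule SUP_upper) simp
        also have "\<dots> = \<bar>(SUP \<sigma>. hsemidist (U \<sigma> (t n) (\<tau> n) ` range x) K)\<bar>"
        proof -
          have "0 \<le> (SUP \<sigma>. hsemidist (U \<sigma> (t n) (\<tau> n) ` range x) K)"
            by (rule SUP_upper2[of "\<sigma> n"]) (auto intro: hsemidist_nonneg)
          then show ?thesis by simp
        qed
        finally have "hsemidist (U (\<sigma> n) (t n) (\<tau> n) ` range x) K < ereal e" using a by simp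
        moreover have "(INF \<xi>\<in>K. ereal (dist (y n) \<xi>)) \<le> hsemidist (U (\<sigma> n) (t n) (\<tau> n) ` range x) K"
          unfolding hsemidist_def by (rule SUP_upper) (simp add: yd)
        ultimately have "(INF \<xi>\<in>K. ereal (dist (y n) \<xi>)) < ereal e" by simp
        then obtain k where "k \<in> K" "ereal (dist (y n) k) < ereal e" by (auto simp: INF_less_iff)
        then show "\<exists>k\<in>K. dist (y n) k < e" by auto
      qed
    qed
    have Kne: "K \<noteq> {}"
    proof
      assume "K = {}"
      with ev[of 1] show False by simp
    qed
    have "\<exists>k\<in>K. \<forall>k'\<in>K. dist (y n) k \<le> dist (y n) k'" for n
      by (rule continuous_attains_inf[OF assms(2) Kne]) (intro continuous_intros)
    then have "\<forall>n. \<exists>k. k \<in> K \<and> (\<forall>k'\<in>K. dist (y n) k \<le> dist (y n) k')" by blast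
    from choice[OF this] obtain k where kk: "\<forall>n. k n \<in> K \<and> (\<forall>k'\<in>K. dist (y n) (k n) \<le> dist (y n) k')"
      by blast
    have kK: "\<And>n. k n \<in> K" and kmin: "\<And>n k'. k' \<in> K \<Longrightarrow> dist (y n) (k n) \<le> dist (y n) k'"
      using kk by auto
    have d0: "(\<lambda>n. dist (y n) (k n)) \<longlonglongrightarrow> 0"
    proof (rule tendstoI)
      fix e :: real assume "e > 0"
      from ev[OF this] show "eventually (\<lambda>n. dist (dist (y n) (k n)) 0 < e) sequentially"
        by (rule eventually_mono) (auto intro: le_less_trans[OF kmin])
    qed
    have d0r: "(\<lambda>n. dist (y (r n)) (k (r n))) \<longlonglongrightarrow> 0" if "strict_mono r" for r
      using LIMSEQ_subseq_LIMSEQ[OF d0 that] by (simp add: o_def)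
    obtain p r where pK: "p \<in> K" and r: "strict_mono r" and kr: "(k \<circ> r) \<longlonglongrightarrow> p"
    proof -
      have sc: "seq_compact K" using assms(2) compact_eq_seq_compact_metric by blast
      show ?thesis by (rule seq_compactE[OF sc, of k]) (use kK that in auto)
    qed
    have "(y \<circ> r) \<longlonglongrightarrow> p"
    proof (rule lim_close[OF kr])
      show "(\<lambda>n. dist ((y \<circ> r) n) ((k \<circ> r) n)) \<longlonglongrightarrow> 0" using d0r[OF r] by simp
    qed
    then have "p \<in> limit_set y" unfolding limit_set_def using r by (intro CollectI exI[of _ r]) auto
    moreover have "limit_set y \<subseteq> K"
    proof
      fix q assume "q \<in> limit_set y"
      then obtain s where s: "strict_mono s" and ys: "(y \<circ> s) \<longlonglongrightarrow> q"
        unfolding limit_set_def mem_Collect_eq by (elim exE conjE)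
      have ks: "(k \<circ> s) \<longlonglongrightarrow> q"
      proof (rule lim_close[OF ys])
        show "(\<lambda>n. dist ((k \<circ> s) n) ((y \<circ> s) n)) \<longlonglongrightarrow> 0"
          using d0r[OF s] by (simp add: dist_commute)
      qed
      show "q \<in> K"
        by (rule closed_sequentially[OF compact_imp_closed[OF assms(2)] _ ks]) (simp add: kK)
    qed
    ultimately show "limit_set y \<noteq> {} \<and> limit_set y \<subseteq> K" by auto
  qed
next
  assume R: "\<forall>y\<in>seq_class U. limit_set y \<noteq> {} \<and> limit_set y \<subseteq> K"
  show "uniformly_attracting U K"
  proof (rule ccontr)
    assume "\<not> uniformly_attracting U K"
    then obtain C where bC: "bounded C" and Cne: "C \<noteq> {}" and
      H0: "\<not> (\<forall>\<epsilon>>0. \<exists>T. \<forall>t \<tau>. \<tau> \<le> t \<and> T \<le> t - \<tau> \<longrightarrow>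
            \<bar>(SUP \<sigma>. hsemidist (U \<sigma> t \<tau> ` C) K)\<bar> < ereal \<epsilon>)"
      unfolding uniformly_attracting_def by (auto simp only: not_all not_imp)
    from H0 obtain e where e: "e > 0" and
      H1: "\<not> (\<exists>T. \<forall>t \<tau>. \<tau> \<le> t \<and> T \<le> t - \<tau> \<longrightarrow>
            \<bar>(SUP \<sigma>. hsemidist (U \<sigma> t \<tau> ` C) K)\<bar> < ereal e)"
      by (auto simp only: not_all not_imp)
    have H: "\<exists>t \<tau>. \<tau> \<le> t \<and> T \<le> t - \<tau> \<and>
            \<not> \<bar>(SUP \<sigma>. hsemidist (U \<sigma> t \<tau> ` C) K)\<bar> < ereal e" for T
      using H1 by (simp only: not_ex not_all not_imp) blast
    have pt: "\<exists>t \<tau> \<sigma> x. \<tau> \<le> t \<and> T \<le> t - \<tau> \<and> x \<in> C \<and>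
               (\<forall>k\<in>K. e/2 < dist (U \<sigma> t \<tau> x) k)" for T
    proof -
      obtain t \<tau> where tt: "\<tau> \<le> t" "T \<le> t - \<tau>" and
        nl: "\<not> \<bar>(SUP \<sigma>. hsemidist (U \<sigma> t \<tau> ` C) K)\<bar> < ereal e" using H by blast
      have "0 \<le> (SUP \<sigma>. hsemidist (U \<sigma> t \<tau> ` C) K)"
        using hsemidist_nonneg[of "U undefined t \<tau> ` C" K] Cne by (meson SUP_upper2 UNIV_I image_is_empty)
      have "ereal (e/2) < ereal e" using e by simp
      moreover from nl \<open>0 \<le> _\<close> have "ereal e \<le> (SUP \<sigma>. hsemidist (U \<sigma> t \<tau> ` C) K)" by simp
      ultimately have "ereal (e/2) < (SUP \<sigma>. hsemidist (U \<sigma> t \<tau> ` C) K)" by (rule less_le_trans)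
      then obtain \<sigma> where "ereal (e/2) < hsemidist (U \<sigma> t \<tau> ` C) K" by (auto simp: less_SUP_iff)
      then obtain x where xC: "x \<in> C" and "ereal (e/2) < (INF \<xi>\<in>K. ereal (dist (U \<sigma> t \<tau> x) \<xi>))"
        unfolding hsemidist_def by (auto simp: less_SUP_iff)
      then have "\<forall>k\<in>K. ereal (e/2) < ereal (dist (U \<sigma> t \<tau> x) k)" by (blast dest: less_INF_D)
      then show ?thesis using tt xC by auto
    qed
    then obtain t \<tau> \<sigma> x where tt: "\<And>n. \<tau> n \<le> t n" "\<And>n. real n \<le> t n - \<tau> n"
      and xC: "\<And>n. x n \<in> C"
      and far: "\<And>n k. k \<in> K \<Longrightarrow> e/2 < dist (U (\<sigma> n) (t n) (\<tau> n) (x n)) k"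
    proof -
      have "\<forall>n::nat. \<exists>t \<tau> \<sigma> x. \<tau> \<le> t \<and> real n \<le> t - \<tau> \<and> x \<in> C \<and>
               (\<forall>k\<in>K. e/2 < dist (U \<sigma> t \<tau> x) k)" using pt by blast
      then have "\<exists>t \<tau> \<sigma> x. \<forall>n::nat. \<tau> n \<le> t n \<and> real n \<le> t n - \<tau> n \<and> x n \<in> C \<and>
               (\<forall>k\<in>K. e/2 < dist (U (\<sigma> n) (t n) (\<tau> n) (x n)) k)" by (simp only: choice_iff)
      then show ?thesis using that by blast
    qed
    define y where "y n = U (\<sigma> n) (t n) (\<tau> n) (x n)" for n
    have "filterlim (\<lambda>n. t n - \<tau> n) at_top sequentially"
      by (rule filterlim_at_top_mono[OF filterlim_real_sequentially]) (use tt in auto)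
    moreover have "bounded (range x)" using bC xC by (meson bounded_subset image_subsetI)
    ultimately have "y \<in> seq_class U" unfolding seq_class_def mem_Collect_eq
      by (intro exI[of _ x] exI[of _ \<sigma>] exI[of _ t] exI[of _ \<tau>]) (use tt in \<open>auto simp: y_def\<close>)
    with R obtain p where "p \<in> limit_set y" "p \<in> K" by blast
    then obtain r where "(y \<circ> r) \<longlonglongrightarrow> p" unfolding limit_set_def mem_Collect_eq by (elim exE conjE)
    then have "eventually (\<lambda>n. dist ((y \<circ> r) n) p < e/2) sequentially"
      using e by (intro tendstoD) (auto simp: o_def)
    then obtain n where "dist (y (r n)) p < e/2" by (auto dest: eventually_happens)
    with far[OF \<open>p \<in> K\<close>, of "r n"] show False unfolding y_def by simp
  qed
qed

end
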